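(* Let $I=(v,R,D)$ be an instance of the truck-drone problem, let $\mathcal{S}_g$ be the schedule produced by the greedy algorithm described in the context (for any tie-breaking), and let $\mathcal{S}_{OPT}$ be an optimal (maximum-length feasible) schedule for $I$. Then $\mathcal{S}_g$ is feasible and $|\mathcal{S}_{OPT}|\le 2|\mathcal{S}_g|$.
   Context: Truck-drone problem: a truck starts at $[0,0]$ at time $0$ and moves along the $x$-axis in the positive direction at speed $1$, so that at time $t$ it is at $[t,0]$. A drone with speed $v>1$ and flying range $R>0$ rides on it. An instance is $I=(v,R,D)$, with $D$ a finite multiset of points not on the positive $x$-axis. A delivery to $d$ starting at $[s,0]$ works as follows: the drone leaves at $[s,0]$, flies straight to $d$, then flies straight to meet the truck at $[r,0]$, where $r>s$ is the unique value with $|[s,0]d|+|d\,[r,0]|=v(r-s)$. The delivery is valid if $v(r-s)\le R$; we write $\mathrm{ret}(s,d)=r$. A schedule $((d_{i_1},s_1),\dots,(d_{i_m},s_m))$ (distinct indices, length $m$) is feasible if $s_1\ge0$, every delivery is valid, and the return point of delivery $j$ is $\le s_{j+1}$. Let $M=R/2$ and $m_0=\frac{R}{2v}\sqrt{v^2-1}$. For $d=[x,y]$ with $|y|\le m_0$, let $x'=M\sqrt{1-y^2/m_0^2}$, $es(d)=x-\frac{R}{2v}-x'$ and $ls(d)=x-\frac{R}{2v}+x'$; then $d$ is reachable by a valid delivery from $[s,0]$ exactly when $es(d)\le s\le ls(d)$. Greedy algorithm: set $s\gets0$ and let $U$ be the set of points of $D$ with $|y|\le m_0$. Repeat the following step.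 Let $F=\{d\in U: es(d)\le s\le ls(d)\}$. If $F\ne\emptyset$, choose $d\in F$ minimizing $\mathrm{ret}(s,d)$, append $(d,s)$ to the schedule, remove $d$ from $U$, and set $s\gets\mathrm{ret}(s,d)$. Otherwise, if some $d\in U$ has $es(d)>s$, set $s\gets\min\{es(d): d\in U, es(d)>s\}$. Otherwise stop. *)

theory Defs
  imports Complex_Main
begin

text \<open>Points are pairs (x,y) of reals; the truck at time t is at (t,0).
  The multiset D of delivery points is represented as a list; deliveries refer
  to indices into this list (so repeated points are distinct deliveries).\<close>

definition edist :: "real \<times> real \<Rightarrow> real \<times> real \<Rightarrow> real" where
  "edist p q = sqrt ((fst p - fst q)^2 + (snd p - snd q)^2)"

definition ret :: "real \<Rightarrow> real \<Rightarrow> real \<times> real \<Rightarrow> real" where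
  "ret v s d = (THE r. r > s \<and> edist (s,0) d + edist d (r,0) = v * (r - s))"

definition valid_delivery :: "real \<Rightarrow> real \<Rightarrow> real \<Rightarrow> real \<times> real \<Rightarrow> bool" where
  "valid_delivery v R s d \<longleftrightarrow> v * (ret v s d - s) \<le> R"

text \<open>A schedule is a list of (index into D, start point) pairs.\<close>
definition feasible :: "real \<Rightarrow> real \<Rightarrow> (real \<times> real) list \<Rightarrow> (nat \<times> real) list \<Rightarrow> bool" where
  "feasible v R D S \<longleftrightarrow>
     distinct (map fst S) \<and>
     (\<forall>(i,s)\<in>set S. i < length D \<and> valid_delivery v R s (D ! i)) \<and>
     (S \<noteq> [] \<longrightarrow> snd (hd S) \<ge> 0) \<and>
     (\<forall>j. Suc j < length S \<longrightarrow> ret v (snd (S ! j)) (D ! fst (S ! j)) \<le> snd (S ! Suc j))"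

definition Mh :: "real \<Rightarrow> real" where "Mh R = R / 2"
definition m0 :: "real \<Rightarrow> real \<Rightarrow> real" where "m0 v R = R / (2 * v) * sqrt (v^2 - 1)"
definition xprime :: "real \<Rightarrow> real \<Rightarrow> real \<times> real \<Rightarrow> real" where
  "xprime v R d = Mh R * sqrt (1 - (snd d)^2 / (m0 v R)^2)"
definition es :: "real \<Rightarrow> real \<Rightarrow> real \<times> real \<Rightarrow> real" where
  "es v R d = fst d - R / (2 * v) - xprime v R d"
definition ls :: "real \<Rightarrow> real \<Rightarrow> real \<times> real \<Rightarrow> real" where
  "ls v R d = fst d - R / (2 * v) + xprime v R d"

definition Fset :: "real \<Rightarrow> real \<Rightarrow> (real \<times> real) list \<Rightarrow> real \<Rightarrow> nat set \<Rightarrow> nat set" where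
  "Fset v R D s U = {i \<in> U. es v R (D ! i) \<le> s \<and> s \<le> ls v R (D ! i)}"

text \<open>Greedy algorithm as a relation: greedy_run v R D s U S means that, started in
  state (s,U), some run of the algorithm (with some tie-breaking) stops and
  appends exactly the schedule S.\<close>
inductive greedy_run :: "real \<Rightarrow> real \<Rightarrow> (real \<times> real) list \<Rightarrow> real \<Rightarrow> nat set \<Rightarrow> (nat \<times> real) list \<Rightarrow> bool"
  for v R D where
  pick: "\<lbrakk> i \<in> Fset v R D s U;
          \<forall>j \<in> Fset v R D s U. ret v s (D ! i) \<le> ret v s (D ! j);
          greedy_run v R D (ret v s (D ! i)) (U - {i}) S \<rbrakk>
         \<Longrightarrow> greedy_run v R D s U ((i, s) # S)"
| jump: "\<lbrakk> Fset v R D s U = {};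
          \<exists>i \<in> U. es v R (D ! i) > s;
          greedy_run v R D (Min {es v R (D ! i) | i. i \<in> U \<and> es v R (D ! i) > s}) U S \<rbrakk>
         \<Longrightarrow> greedy_run v R D s U S"
| stop: "\<lbrakk> Fset v R D s U = {}; \<forall>i \<in> U. \<not> es v R (D ! i) > s \<rbrakk>
         \<Longrightarrow> greedy_run v R D s U []"

definition greedy_init :: "real \<Rightarrow> real \<Rightarrow> (real \<times> real) list \<Rightarrow> nat set" where
  "greedy_init v R D = {i. i < length D \<and> \<bar>snd (D ! i)\<bar> \<le> m0 v R}"

definition greedy_schedule :: "real \<Rightarrow> real \<Rightarrow> (real \<times> real) list \<Rightarrow> (nat \<times> real) list \<Rightarrow> bool" where
  "greedy_schedule v R D S \<longleftrightarrow> greedy_run v R D 0 (greedy_init v R D) S"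

end

theory Submission imports Defs "HOL-Analysis.Product_Vector" begin


lemma edist_dist: "edist p q = dist p q"
  by (cases p; cases q) (simp add: edist_def dist_Pair_Pair dist_real_def power2_abs)

lemma dist_axis: "dist ((r::real),(0::real)) (r',0) = \<bar>r - r'\<bar>"
  by (simp add: dist_Pair_Pair dist_real_def)

definition GG :: "real \<Rightarrow> real \<Rightarrow> real \<times> real \<Rightarrow> real \<Rightarrow> real" where
  "GG v s d r = dist (s,0) d + dist d (r,0) - v*(r-s)"

lemma GG_mono:
  fixes r r' s :: real and d :: "real \<times> real"
  assumes "v > 1" "r < r'" shows "GG v s d r' < GG v s d r"
proof -
  have "dist d (r',0::real) \<le> dist d (r,0::real) + dist (r,0::real) (r',0::real)" by (rule dist_triangle)
  also have "dist ((r::real),(0::real)) (r',0) = r' - r" using assms by (simp add: dist_axis)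
  finally have h1: "dist d (r',0) \<le> dist d (r,0) + (r' - r)" .
  have "(r'-r) * 1 < (r' - r) * v" using assms by (intro mult_strict_left_mono) auto
  hence "v*(r'-s) > v*(r-s) + (r'-r)" by (simp add: algebra_simps)
  thus ?thesis using h1 unfolding GG_def by linarith
qed

lemma GG_cont: "continuous_on A (GG v s d)"
  unfolding GG_def by (intro continuous_intros)

lemma ret_ex:
  fixes s v :: real and d :: "real \<times> real"
  assumes "v > 1" "d \<noteq> (s,0)"
  shows "ret v s d > s \<and> GG v s d (ret v s d) = 0"
proof -
  let ?e = "dist (s,0) d"
  have e: "?e > 0" using assms by (metis dist_pos_lt)
  define b where "b = s + 2 * ?e / (v - 1)"
  have "2*?e/(v-1) > 0" using e assms by simp
  hence sb: "s < b" by (simp add: b_def)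
  have "GG v s d s = 2*?e" unfolding GG_def by (simp add: dist_commute)
  have "dist d (b,0::real) \<le> dist d (s,0::real) + dist (s,0::real) (b,0::real)" by (rule dist_triangle)
  hence "GG v s d b \<le> 2 * ?e + (b - s) - v * (b - s)"
    unfolding GG_def using sb by (simp add: dist_axis dist_commute)
  also have "\<dots> = 0" using assms by (simp add: b_def field_simps)
  finally have gb: "GG v s d b \<le> 0" .
  have "\<exists>r. s \<le> r \<and> r \<le> b \<and> GG v s d r = 0"
    by (rule IVT2'[of "GG v s d" b 0 s, OF gb _ _ GG_cont]) (use \<open>GG v s d s = 2*?e\<close> e sb in auto)
  then obtain r where r: "s \<le> r" "r \<le> b" "GG v s d r = 0" by blast
  have rs: "r > s" using r e \<open>GG v s d s = 2*?e\<close> by (cases "r = s") auto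
  have "ret v s d = r"
    unfolding ret_def
  proof (rule the_equality)
    show "s < r \<and> edist (s, 0) d + edist d (r, 0) = v * (r - s)"
      using rs r(3) by (simp add: edist_dist GG_def)
  next
    fix r' assume "s < r' \<and> edist (s, 0) d + edist d (r', 0) = v * (r' - s)"
    hence "GG v s d r' = 0" by (simp add: edist_dist GG_def)
    thus "r' = r" using GG_mono[OF assms(1), of r r' s d] GG_mono[OF assms(1), of r' r s d] r(3)
      by (cases "r < r'"; cases "r' < r") auto
  qed
  thus ?thesis using rs r by simp
qed

lemma GG_le:
  fixes r r' s :: real and d :: "real \<times> real"
  assumes "v > 1" "r \<le> r'" shows "GG v s d r' \<le> GG v s d r"
  using GG_mono[OF assms(1), of r r' s d] assms by (cases "r = r'") auto

lemma ret_le_iff: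
  fixes s v :: real and d :: "real \<times> real"
  assumes "v > 1" "d \<noteq> (s,0)"
  shows "ret v s d \<le> b \<longleftrightarrow> GG v s d b \<le> 0"
proof
  assume "ret v s d \<le> b" thus "GG v s d b \<le> 0"
    using GG_le[OF assms(1), of "ret v s d" b s d] ret_ex[OF assms] by simp
next
  assume h: "GG v s d b \<le> 0"
  show "ret v s d \<le> b"
  proof (rule ccontr)
    assume "\<not> ret v s d \<le> b"
    hence "GG v s d (ret v s d) < GG v s d b" using GG_mono[OF assms(1), of b "ret v s d" s d] by simp
    thus False using h ret_ex[OF assms] by simp
  qed
qed

definition inside :: "real \<Rightarrow> real \<Rightarrow> real \<Rightarrow> real \<times> real \<Rightarrow> bool" where
  "inside v R s d \<longleftrightarrow> dist (s,0) d + dist d (s + R/v, 0) \<le> R"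

lemma valid_iff_inside:
  fixes s v R :: real and d :: "real \<times> real"
  assumes "v > 1" "R > 0" "d \<noteq> (s,0)"
  shows "valid_delivery v R s d \<longleftrightarrow> inside v R s d"
proof -
  have "valid_delivery v R s d \<longleftrightarrow> ret v s d \<le> s + R/v"
    unfolding valid_delivery_def using assms by (simp add: field_simps)
  also have "\<dots> \<longleftrightarrow> GG v s d (s + R/v) \<le> 0" by (rule ret_le_iff[OF assms(1,3)])
  also have "\<dots> \<longleftrightarrow> inside v R s d" unfolding GG_def inside_def using assms by simp
  finally show ?thesis .
qed

lemma ret_mono:
  fixes s s' v :: real and d :: "real \<times> real"
  assumes "v > 1" "d \<noteq> (s,0)" "d \<noteq> (s',0)" "s \<le> s'"
  shows "ret v s d \<le> ret v s' d"
proof (cases "ret v s d \<le> s'")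
  case True thus ?thesis using ret_ex[OF assms(1,3)] by simp
next
  case False
  let ?r = "ret v s d"
  have "dist (s,0) d \<le> dist (s,0) (s',0::real) + dist (s',0) d" by (rule dist_triangle)
  hence h: "dist (s,0) d \<le> (s' - s) + dist (s',0) d" using assms by (simp add: dist_axis)
  have "(s'-s) * 1 \<le> (s' - s) * v" using assms by (intro mult_left_mono) auto
  hence "GG v s' d ?r \<ge> GG v s d ?r" unfolding GG_def using h by (simp add: algebra_simps)
  hence "GG v s' d ?r \<ge> 0" using ret_ex[OF assms(1,2)] by simp
  hence "\<not> ret v s' d < ?r" using GG_mono[OF assms(1), of "ret v s' d" ?r s' d] ret_ex[OF assms(1,3)] by auto
  thus ?thesis by simp
qed

lemma key:
  fixes a s v R :: real and d :: "real \<times> real"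
  assumes "v > 1" "R > 0" "d \<noteq> (s,0)" "a \<le> s" "\<not> inside v R a d" "valid_delivery v R s d"
  shows "ret v s d > a + R/v"
proof (rule ccontr)
  let ?r = "ret v s d" and ?L = "R/v"
  assume "\<not> ?r > a + ?L"
  hence rl: "?r \<le> a + ?L" by simp
  have ex: "?r > s" "dist (s,0) d + dist d (?r,0) = v*(?r - s)" using ret_ex[OF assms(1,3)] unfolding GG_def by auto
  have t1: "dist (a,0) d \<le> dist (a,0) (s,0::real) + dist (s,0) d" by (rule dist_triangle)
  have t2: "dist d (a+?L,0) \<le> dist d (?r,0::real) + dist (?r,0) (a+?L,0::real)" by (rule dist_triangle)
  have vl: "v * (?r - s) \<le> R" using assms(6) unfolding valid_delivery_def .
  have "v * ?L = R" using assms by simp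
  have "(?r - s) * (v - 1) \<le> ?L * (v - 1)"
  proof -
    have "v*(?r - s) \<le> v * ?L" using vl \<open>v * ?L = R\<close> by simp
    hence "?r - s \<le> ?L" using assms(1) by (simp add: pos_le_divide_eq mult.commute)
    thus ?thesis using assms(1) by (intro mult_right_mono) auto
  qed
  hence "R < dist (a,0) d + dist d (a+?L,0)" using assms(5) unfolding inside_def by simp
  also have "\<dots> \<le> (s - a) + dist (s,0) d + dist d (?r,0) + (a + ?L - ?r)"
    using t1 t2 assms(4) rl ex by (simp add: dist_axis)
  also have "\<dots> = (s - a) + v*(?r - s) + (a + ?L - ?r)" using ex by simp
  also have "\<dots> = (?r - s)*(v-1) + ?L" by (simp add: algebra_simps)
  also have "\<dots> \<le> ?L*(v-1) + ?L" using \<open>(?r - s) * (v - 1) \<le> ?L * (v - 1)\<close> by simp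
  also have "?L*(v-1) + ?L = v * ?L" by (simp add: algebra_simps diff_divide_distrib)
  also have "\<dots> = R" by fact
  finally show False by simp
qed



lemma aux16: "(x::real) - y = 16*(p - q) \<Longrightarrow> (y \<le> x \<longleftrightarrow> q \<le> p)" by auto

lemma ell:
  fixes u y c M b :: real
  assumes "0 < c" "c < M" "b > 0" "b^2 = M^2 - c^2"
  shows "sqrt((u+c)^2+y^2) + sqrt((u-c)^2+y^2) \<le> 2*M \<longleftrightarrow> b^2*u^2 + M^2*y^2 \<le> M^2*b^2"
proof -
  define A where "A = (u+c)^2+y^2"
  define B where "B = (u-c)^2+y^2"
  define W where "W = u^2+c^2+y^2"
  have A0: "A \<ge> 0" and B0: "B \<ge> 0" by (simp_all add: A_def B_def)
  have AB: "A + B = 2*W" by (simp add: A_def B_def W_def power2_eq_square algebra_simps)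
  have AB2: "4*(A*B) = 4*W^2 - 16*u^2*c^2" by (simp add: A_def B_def W_def power2_eq_square algebra_simps)
  have sq: "(sqrt A + sqrt B)^2 = A + B + 2*sqrt(A*B)"
    using A0 B0 by (simp add: power2_eq_square algebra_simps real_sqrt_mult)
  have key: "4*(A*B) \<le> (4*M^2 - 2*W)^2 \<longleftrightarrow> b^2*u^2 + M^2*y^2 \<le> M^2*b^2"
  proof -
    have "(4*M^2 - 2*W)^2 - 4*(A*B) = 16*(M^2*b^2 - (b^2*u^2 + M^2*y^2))"
      unfolding AB2 W_def using assms(4) by algebra
    thus ?thesis using aux16 by blast
  qed
  have M0: "M > 0" using assms by simp
  show ?thesis
  proof
    assume h: "sqrt((u+c)^2+y^2) + sqrt((u-c)^2+y^2) \<le> 2*M"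
    hence h': "sqrt A + sqrt B \<le> 2*M" by (simp add: A_def B_def)
    have "(sqrt A + sqrt B)^2 \<le> (2*M)^2"
      using h' by (intro power_mono) (auto simp: A0 B0)
    hence 1: "2*sqrt(A*B) \<le> 4*M^2 - 2*W" using sq AB by (simp add: power2_eq_square)
    have "0 \<le> 2*sqrt(A*B)" using A0 B0 by simp
    hence "(2*sqrt(A*B))^2 \<le> (4*M^2 - 2*W)^2" using 1 by (intro power_mono) auto
    moreover have "(2*sqrt(A*B))^2 = 4*(A*B)" using A0 B0 by (simp add: power_mult_distrib)
    ultimately show "b^2*u^2 + M^2*y^2 \<le> M^2*b^2" using key by simp
  next
    assume h: "b^2*u^2 + M^2*y^2 \<le> M^2*b^2"
    have bu: "b^2*u^2 \<ge> 0" "M^2*y^2 \<ge> 0" by simp_all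
    have "M^2*y^2 \<le> M^2*b^2" using h bu by linarith
    hence y2: "y^2 \<le> b^2" using M0 by simp
    have "b^2*u^2 \<le> M^2*b^2" using h bu(2) by linarith
    hence "b^2*u^2 \<le> b^2*M^2" by (simp only: mult.commute)
    hence u2: "u^2 \<le> M^2" using assms(3) by simp
    have W2: "2*W \<le> 4*M^2" unfolding W_def using y2 u2 assms(4) by simp
    have "4*(A*B) \<le> (4*M^2 - 2*W)^2" using key h by simp
    hence "sqrt (4*(A*B)) \<le> sqrt ((4*M^2 - 2*W)^2)" by (rule real_sqrt_le_mono)
    hence "2*sqrt(A*B) \<le> 4*M^2 - 2*W" using W2 by (simp add: real_sqrt_mult)
    moreover have "(2*M)^2 = 4*M^2" by (simp add: power_mult_distrib)
    ultimately have "(sqrt A + sqrt B)^2 \<le> (2*M)^2" using sq AB by linarith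
    hence "sqrt A + sqrt B \<le> 2*M" using power2_le_imp_le[of "sqrt A + sqrt B" "2*M"] M0 by linarith
    thus "sqrt((u+c)^2+y^2) + sqrt((u-c)^2+y^2) \<le> 2*M" by (simp add: A_def B_def)
  qed
qed

lemma ell2:
  fixes u y M b :: real
  assumes "b > 0" "M > 0"
  shows "b^2*u^2 + M^2*y^2 \<le> M^2*b^2 \<longleftrightarrow> \<bar>y\<bar> \<le> b \<and> \<bar>u\<bar> \<le> M * sqrt (1 - y^2/b^2)"
proof -
  have b2: "b^2 > 0" using assms by simp
  have eq: "b^2*u^2 + M^2*y^2 \<le> M^2*b^2 \<longleftrightarrow> u^2 \<le> M^2 * (1 - y^2/b^2)"
  proof -
    have "M^2 * (1 - y^2/b^2) = (M^2*b^2 - M^2*y^2) / b^2" using b2 by (simp add: field_simps)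
    hence "u^2 \<le> M^2 * (1 - y^2/b^2) \<longleftrightarrow> u^2 * b^2 \<le> M^2*b^2 - M^2*y^2"
      using b2 by (simp add: pos_le_divide_eq)
    thus ?thesis by (simp add: algebra_simps)
  qed
  show ?thesis
  proof
    assume h: "b^2*u^2 + M^2*y^2 \<le> M^2*b^2"
    have bu: "b^2*u^2 \<ge> 0" by simp
    have "M^2*y^2 \<le> M^2*b^2" using h bu by linarith
    hence "y^2 \<le> b^2" using assms by simp
    hence y: "\<bar>y\<bar> \<le> b" using assms abs_le_square_iff[of y b] by simp
    have "u^2 \<le> M^2 * (1 - y^2/b^2)" using eq h by simp
    hence "sqrt (u^2) \<le> sqrt (M^2 * (1 - y^2/b^2))" by (rule real_sqrt_le_mono)
    hence "\<bar>u\<bar> \<le> M * sqrt (1 - y^2/b^2)" using assms by (simp add: real_sqrt_mult)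
    thus "\<bar>y\<bar> \<le> b \<and> \<bar>u\<bar> \<le> M * sqrt (1 - y^2/b^2)" using y by simp
  next
    assume h: "\<bar>y\<bar> \<le> b \<and> \<bar>u\<bar> \<le> M * sqrt (1 - y^2/b^2)"
    have "y^2 \<le> b^2" using h assms abs_le_square_iff[of y b] by simp
    hence t0: "0 \<le> 1 - y^2/b^2" using b2 by simp
    have "\<bar>u\<bar>^2 \<le> (M * sqrt (1 - y^2/b^2))^2" using h by (intro power_mono) auto
    hence "u^2 \<le> M^2 * (1 - y^2/b^2)" using t0 by (simp add: power_mult_distrib)
    thus "b^2*u^2 + M^2*y^2 \<le> M^2*b^2" using eq by simp
  qed
qed



lemma inside_iff:
  fixes s v R :: real and d :: "real \<times> real"
  assumes "v > 1" "R > 0"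
  shows "inside v R s d \<longleftrightarrow> \<bar>snd d\<bar> \<le> m0 v R \<and> es v R d \<le> s \<and> s \<le> ls v R d"
proof -
  obtain x y where d: "d = (x,y)" by (cases d)
  define c where "c = R/(2*v)"
  define M where "M = R/2"
  define b where "b = m0 v R"
  define u where "u = x - s - c"
  have v0: "v > 0" using assms by simp
  have c0: "c > 0" using assms by (simp add: c_def)
  have cM: "c < M" using assms unfolding c_def M_def by (simp add: field_simps)
  have sq: "sqrt (v^2 - 1) > 0" using assms by (simp add: power_less_one_iff)
  have b0: "b > 0" unfolding b_def m0_def using sq assms by simp
  have "b^2 = (R/(2*v))^2 * (sqrt (v^2-1))^2" unfolding b_def m0_def by (simp add: power_mult_distrib power_divide)
  also have "(sqrt (v^2-1))^2 = v^2 - 1" using sq by simp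
  finally have b2: "b^2 = M^2 - c^2" unfolding M_def c_def using v0 by (simp add: field_simps power2_eq_square)
  have d1: "dist (s,0) d = sqrt((u+c)^2+y^2)"
    unfolding d u_def by (simp add: dist_Pair_Pair dist_real_def power2_commute)
  have d2: "dist d (s + R/v, 0) = sqrt((u-c)^2+y^2)"
  proof -
    have "x - (s + R/v) = u - c" unfolding u_def c_def using v0 by (simp add: field_simps)
    thus ?thesis unfolding d by (simp add: dist_Pair_Pair dist_real_def)
  qed
  have "inside v R s d \<longleftrightarrow> sqrt((u+c)^2+y^2) + sqrt((u-c)^2+y^2) \<le> 2*M"
    unfolding inside_def d1 d2 M_def by simp
  also have "\<dots> \<longleftrightarrow> b^2*u^2 + M^2*y^2 \<le> M^2*b^2" by (rule ell[OF c0 cM b0 b2])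
  also have "\<dots> \<longleftrightarrow> \<bar>y\<bar> \<le> b \<and> \<bar>u\<bar> \<le> M * sqrt (1 - y^2/b^2)" 
    by (rule ell2[OF b0]) (use cM c0 in simp)
  also have "\<dots> \<longleftrightarrow> \<bar>snd d\<bar> \<le> m0 v R \<and> es v R d \<le> s \<and> s \<le> ls v R d"
  proof -
    define xp where "xp = M * sqrt (1 - y^2/b^2)"
    have e1: "es v R d = x - c - xp" unfolding es_def xprime_def xp_def d M_def Mh_def b_def c_def by simp
    have e2: "ls v R d = x - c + xp" unfolding ls_def xprime_def xp_def d M_def Mh_def b_def c_def by simp
    have "\<bar>u\<bar> \<le> xp \<longleftrightarrow> es v R d \<le> s \<and> s \<le> ls v R d" unfolding e1 e2 u_def abs_le_iff by linarith
    thus ?thesis unfolding xp_def d b_def by simp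
  qed
  finally show ?thesis .
qed



fun chain :: "real \<Rightarrow> (real \<times> real) list \<Rightarrow> (nat \<times> real) list \<Rightarrow> bool" where
  "chain v D [] = True"
| "chain v D [x] = True"
| "chain v D (x#y#xs) = (ret v (snd x) (D ! fst x) \<le> snd y \<and> chain v D (y#xs))"

lemma chain_iff:
  "chain v D S \<longleftrightarrow> (\<forall>j. Suc j < length S \<longrightarrow> ret v (snd (S ! j)) (D ! fst (S ! j)) \<le> snd (S ! Suc j))"
proof (induction v D S rule: chain.induct)
  case (3 v D x y xs)
  show ?case
  proof
    assume h: "chain v D (x # y # xs)"
    show "\<forall>j. Suc j < length (x # y # xs) \<longrightarrow> ret v (snd ((x # y # xs) ! j)) (D ! fst ((x # y # xs) ! j)) \<le> snd ((x # y # xs) ! Suc j)"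
    proof (intro allI impI)
      fix j assume j: "Suc j < length (x # y # xs)"
      show "ret v (snd ((x # y # xs) ! j)) (D ! fst ((x # y # xs) ! j)) \<le> snd ((x # y # xs) ! Suc j)"
      proof (cases j)
        case 0 thus ?thesis using h by simp
      next
        case (Suc k)
        have "chain v D (y#xs)" using h by simp
        hence "\<forall>j. Suc j < length (y#xs) \<longrightarrow> ret v (snd ((y#xs) ! j)) (D ! fst ((y#xs) ! j)) \<le> snd ((y#xs) ! Suc j)"
          using "3.IH" by blast
        thus ?thesis using j Suc by simp
      qed
    qed
  next
    assume h: "\<forall>j. Suc j < length (x # y # xs) \<longrightarrow> ret v (snd ((x # y # xs) ! j)) (D ! fst ((x # y # xs) ! j)) \<le> snd ((x # y # xs) ! Suc j)"
    have a: "ret v (snd x) (D ! fst x) \<le> snd y" using h[rule_format, of 0] by simp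
    have "\<forall>j. Suc j < length (y#xs) \<longrightarrow> ret v (snd ((y#xs) ! j)) (D ! fst ((y#xs) ! j)) \<le> snd ((y#xs) ! Suc j)"
    proof (intro allI impI)
      fix j assume "Suc j < length (y#xs)"
      thus "ret v (snd ((y#xs) ! j)) (D ! fst ((y#xs) ! j)) \<le> snd ((y#xs) ! Suc j)"
        using h[rule_format, of "Suc j"] by simp
    qed
    thus "chain v D (x # y # xs)" using a "3.IH" by simp
  qed
qed auto

lemma chain_tl: "chain v D (x#xs) \<Longrightarrow> chain v D xs"
  by (cases xs) auto

lemma chain_Cons: "chain v D xs \<Longrightarrow> (xs \<noteq> [] \<longrightarrow> ret v (snd x) (D ! fst x) \<le> snd (hd xs)) \<Longrightarrow> chain v D (x#xs)"
  by (cases xs) auto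

definition cnt :: "nat set \<Rightarrow> nat set \<Rightarrow> (nat \<times> real) list \<Rightarrow> nat" where
  "cnt U G Q = length (filter (\<lambda>x. fst x \<in> U \<and> fst x \<notin> G) Q)"

lemma length_filter_mono: "(\<And>x. P x \<Longrightarrow> Q x) \<Longrightarrow> length (filter P xs) \<le> length (filter Q xs)"
  by (induction xs) auto

definition okd :: "real \<Rightarrow> real \<Rightarrow> (real \<times> real) list \<Rightarrow> (nat \<times> real) list \<Rightarrow> bool" where
  "okd v R D Q \<longleftrightarrow> (\<forall>(i,t)\<in>set Q. i < length D \<and> valid_delivery v R t (D ! i))"

locale TD =
  fixes v R :: real and D :: "(real \<times> real) list"
  assumes v1: "v > 1" and R0: "R > 0"
    and offax: "\<forall>d \<in> set D. \<not> (snd d = 0 \<and> fst d \<ge> 0)"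
begin

lemma noteq: "s \<ge> 0 \<Longrightarrow> i < length D \<Longrightarrow> D ! i \<noteq> (s,0)"
  using offax nth_mem by fastforce

lemma valid_iff: "s \<ge> 0 \<Longrightarrow> i < length D \<Longrightarrow>
   valid_delivery v R s (D!i) \<longleftrightarrow> \<bar>snd (D!i)\<bar> \<le> m0 v R \<and> es v R (D!i) \<le> s \<and> s \<le> ls v R (D!i)"
  using valid_iff_inside[OF v1 R0 noteq] inside_iff[OF v1 R0] by simp

lemma retgt: "s \<ge> 0 \<Longrightarrow> i < length D \<Longrightarrow> ret v s (D!i) > s"
  using ret_ex[OF v1 noteq] by simp

lemma starts_after:
  "chain v D ((j,t)#Q) \<Longrightarrow> t \<ge> 0 \<Longrightarrow> okd v R D ((j,t)#Q) \<Longrightarrow> \<forall>x\<in>set Q. snd x \<ge> ret v t (D!j)"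
proof (induction Q arbitrary: j t)
  case Nil thus ?case by simp
next
  case (Cons y Q)
  obtain j' t' where y: "y = (j',t')" by (cases y)
  have jl: "j < length D" "j' < length D" using Cons.prems(3) y unfolding okd_def by auto
  have tt: "t' \<ge> ret v t (D!j)" using Cons.prems(1) y by simp
  have rt: "ret v t (D!j) > t" using retgt[OF Cons.prems(2) jl(1)] .
  have t0: "t' \<ge> 0" using tt rt Cons.prems(2) by linarith
  have "\<forall>x\<in>set Q. snd x \<ge> ret v t' (D!j')"
    using Cons.IH[of j' t'] Cons.prems y t0 unfolding okd_def by auto
  moreover have "ret v t' (D!j') > t'" using retgt[OF t0 jl(2)] .
  ultimately show ?case using tt y by force
qed

lemma init_sub: "greedy_init v R D \<subseteq> {..<length D}"
  unfolding greedy_init_def by auto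

lemma jump_min:
  assumes "U \<subseteq> {..<length D}" "\<exists>i\<in>U. es v R (D!i) > s"
  shows "Min {es v R (D ! i) | i. i \<in> U \<and> es v R (D ! i) > s} > s"
    and "\<exists>i\<in>U. es v R (D!i) = Min {es v R (D ! i) | i. i \<in> U \<and> es v R (D ! i) > s} \<and> es v R (D!i) > s"
    and "\<And>i. i \<in> U \<Longrightarrow> es v R (D!i) > s \<Longrightarrow> Min {es v R (D ! i) | i. i \<in> U \<and> es v R (D ! i) > s} \<le> es v R (D!i)"
proof -
  let ?A = "{es v R (D ! i) | i. i \<in> U \<and> es v R (D ! i) > s}"
  have fin: "finite ?A"
  proof -
    have "?A \<subseteq> (\<lambda>i. es v R (D!i)) ` U" by auto
    moreover have "finite U" using assms(1) finite_subset by blast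
    ultimately show ?thesis using finite_subset by blast
  qed
  have ne: "?A \<noteq> {}" using assms(2) by auto
  have "Min ?A \<in> ?A" using Min_in[OF fin ne] .
  thus "Min ?A > s" and "\<exists>i\<in>U. es v R (D!i) = Min ?A \<and> es v R (D!i) > s" by auto
  show "\<And>i. i \<in> U \<Longrightarrow> es v R (D!i) > s \<Longrightarrow> Min ?A \<le> es v R (D!i)"
    using Min_le[OF fin] by blast
qed

lemma greedy_inv:
  assumes "greedy_run v R D s U S" "s \<ge> 0" "U \<subseteq> greedy_init v R D"
  shows "distinct (map fst S) \<and> fst ` set S \<subseteq> U \<and> okd v R D S \<and> (\<forall>x\<in>set S. snd x \<ge> s)
         \<and> chain v D S \<and> (S \<noteq> [] \<longrightarrow> snd (hd S) \<ge> s)"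
  using assms
proof (induction rule: greedy_run.induct)
  case (pick i s U S)
  have iU: "i \<in> U" and es: "es v R (D!i) \<le> s" "s \<le> ls v R (D!i)" using pick.hyps(1) unfolding Fset_def by auto
  have il: "i < length D" and iy: "\<bar>snd (D!i)\<bar> \<le> m0 v R" using iU pick.prems(2) unfolding greedy_init_def by auto
  have val: "valid_delivery v R s (D!i)" using valid_iff[OF pick.prems(1) il] iy es by simp
  have rg: "ret v s (D!i) > s" using retgt[OF pick.prems(1) il] .
  have IH: "distinct (map fst S) \<and> fst ` set S \<subseteq> U - {i} \<and> okd v R D S \<and> (\<forall>x\<in>set S. snd x \<ge> ret v s (D!i))
         \<and> chain v D S \<and> (S \<noteq> [] \<longrightarrow> snd (hd S) \<ge> ret v s (D!i))"
    using pick.IH rg pick.prems by auto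
  show ?case
  proof (intro conjI)
    show "distinct (map fst ((i, s) # S))" using IH by auto
    show "fst ` set ((i, s) # S) \<subseteq> U" using IH iU by auto
    show "okd v R D ((i, s) # S)" using IH il val unfolding okd_def by auto
    show "\<forall>x\<in>set ((i, s) # S). s \<le> snd x" using IH rg by force
    show "chain v D ((i, s) # S)" using IH by (intro chain_Cons) auto
    show "(i, s) # S \<noteq> [] \<longrightarrow> s \<le> snd (hd ((i, s) # S))" by simp
  qed
next
  case (jump s U S)
  have "U \<subseteq> {..<length D}" using jump.prems(2) init_sub by blast
  from jump_min(1)[OF this jump.hyps(2)]
  show ?case using jump.IH jump.prems by fastforce
next
  case (stop s U)
  thus ?case unfolding okd_def by simp
qed

lemma greedy_exists:
  assumes "finite U"
  shows "\<exists>S. greedy_run v R D s U S"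
  using assms
proof (induction "card U" arbitrary: U s rule: less_induct)
  case less
  note fU = less.prems
  note oIH = less.hyps
  have inner: "\<And>n s. card {i\<in>U. es v R (D!i) > s} = n \<Longrightarrow> \<exists>S. greedy_run v R D s U S"
  proof -
    fix n s
    show "card {i\<in>U. es v R (D!i) > s} = n \<Longrightarrow> \<exists>S. greedy_run v R D s U S"
    proof (induction n arbitrary: s rule: less_induct)
      case (less n)
      show ?case
      proof (cases "Fset v R D s U = {}")
        case False
        let ?F = "Fset v R D s U"
        have finF: "finite ?F" using fU unfolding Fset_def by auto
        let ?f = "\<lambda>j. ret v s (D!j)"
        have "Min (?f ` ?F) \<in> ?f ` ?F" using finF False by (intro Min_in) auto
        then obtain i where i: "i \<in> ?F" "?f i = Min (?f ` ?F)" by auto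
        have imin: "\<forall>j\<in>?F. ?f i \<le> ?f j" using i(2) finF by auto
        have iU: "i \<in> U" using i(1) unfolding Fset_def by auto
        have "card (U - {i}) < card U" using iU fU by (meson card_Diff1_less)
        then obtain S where "greedy_run v R D (?f i) (U - {i}) S"
          using oIH[of "U - {i}"] fU by blast
        thus ?thesis using greedy_run.pick[OF i(1) imin] by blast
      next
        case Fe: True
        show ?thesis
        proof (cases "\<exists>i\<in>U. es v R (D!i) > s")
          case False thus ?thesis using greedy_run.stop[OF Fe] by blast
        next
          case True
          let ?s' = "Min {es v R (D ! i) | i. i \<in> U \<and> es v R (D ! i) > s}"
          let ?A = "{es v R (D ! i) | i. i \<in> U \<and> es v R (D ! i) > s}"
          have finA: "finite ?A"
          proof -
            have "?A \<subseteq> (\<lambda>i. es v R (D!i)) ` U" by auto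
            thus ?thesis using fU finite_subset by blast
          qed
          have ne: "?A \<noteq> {}" using True by auto
          have "?s' \<in> ?A" using Min_in[OF finA ne] .
          then obtain i0 where i0: "i0 \<in> U" "es v R (D!i0) > s" "es v R (D!i0) = ?s'" by auto
          have s1: "{i\<in>U. es v R (D!i) > ?s'} \<subseteq> {i\<in>U. es v R (D!i) > s}"
            using i0 by auto
          have s2: "i0 \<in> {i\<in>U. es v R (D!i) > s}" "i0 \<notin> {i\<in>U. es v R (D!i) > ?s'}" using i0 by auto
          have sub: "{i\<in>U. es v R (D!i) > ?s'} \<subset> {i\<in>U. es v R (D!i) > s}"
            using s1 s2 by blast
          have "card {i\<in>U. es v R (D!i) > ?s'} < n"
            using psubset_card_mono[OF _ sub] fU less.prems by auto
          then obtain S where "greedy_run v R D ?s' U S" using less.IH by blast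
          thus ?thesis using greedy_run.jump[OF Fe True] by blast
        qed
      qed
    qed
  qed
  show ?case using inner by blast
qed

lemma okd_tl: "okd v R D (x#Q) \<Longrightarrow> okd v R D Q" unfolding okd_def by auto

lemma cnt_Cons: "cnt U G ((j,t)#Q) = (if j \<in> U \<and> j \<notin> G then Suc (cnt U G Q) else cnt U G Q)"
  unfolding cnt_def by simp

lemma es_gt:
  assumes "j \<in> U" "valid_delivery v R t (D!j)" "s \<le> t" "s \<ge> 0" "j < length D" "Fset v R D s U = {}"
  shows "es v R (D!j) > s"
proof (rule ccontr)
  assume "\<not> es v R (D!j) > s"
  moreover have "ls v R (D!j) \<ge> t" using valid_iff[of t j] assms by simp
  moreover have "s \<le> ls v R (D!j)" using calculation assms(3) by linarith
  ultimately have "j \<in> Fset v R D s U" using assms(1) unfolding Fset_def by simp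
  thus False using assms by simp
qed

lemma tail_props:
  assumes "chain v D ((j,t)#Q)" "okd v R D ((j,t)#Q)" "t \<ge> 0"
  shows "chain v D Q" "okd v R D Q" "\<forall>x\<in>set Q. snd x \<ge> ret v t (D!j)" "ret v t (D!j) > t" "j < length D"
    "valid_delivery v R t (D!j)"
  using chain_tl[OF assms(1)] okd_tl[OF assms(2)] starts_after[OF assms(1,3,2)]
    retgt[OF assms(3)] assms(2) unfolding okd_def by auto

lemma greedy_count:
  assumes "greedy_run v R D s U S" "s \<ge> 0" "U \<subseteq> greedy_init v R D"
  shows "\<forall>Q. chain v D Q \<and> okd v R D Q \<and> (\<forall>x\<in>set Q. snd x \<ge> s) \<longrightarrow> cnt U (fst ` set S) Q \<le> length S"
  using assms
proof (induction rule: greedy_run.induct)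
  case (pick i s U S)
  let ?b = "ret v s (D!i)"
  let ?G = "fst ` set ((i,s)#S)"
  have iU: "i \<in> U" and es: "es v R (D!i) \<le> s" "s \<le> ls v R (D!i)" using pick.hyps(1) unfolding Fset_def by auto
  have il: "i < length D" and iy: "\<bar>snd (D!i)\<bar> \<le> m0 v R" using iU pick.prems(2) unfolding greedy_init_def by auto
  have val: "valid_delivery v R s (D!i)" using valid_iff[OF pick.prems(1) il] iy es by simp
  have rg: "?b > s" using retgt[OF pick.prems(1) il] .
  have bL: "?b \<le> s + R/v" using val v1 unfolding valid_delivery_def by (simp add: field_simps)
  have IH: "\<forall>Q. chain v D Q \<and> okd v R D Q \<and> (\<forall>x\<in>set Q. snd x \<ge> ?b) \<longrightarrow> cnt (U - {i}) (fst ` set S) Q \<le> length S"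
    using pick.IH rg pick.prems by auto
  have mono: "cnt U ?G Q \<le> cnt (U - {i}) (fst ` set S) Q" for Q
    unfolding cnt_def by (rule length_filter_mono) auto
  show ?case
  proof (intro allI impI)
    fix Q
    show "chain v D Q \<and> okd v R D Q \<and> (\<forall>x\<in>set Q. snd x \<ge> s) \<Longrightarrow> cnt U ?G Q \<le> length ((i,s)#S)"
    proof (induction Q)
      case Nil thus ?case by (simp add: cnt_def)
    next
      case (Cons y Q)
      obtain j t where y: "y = (j,t)" by (cases y)
      have st: "s \<le> t" using Cons.prems y by auto
      have t0: "t \<ge> 0" using st pick.prems(1) by linarith
      note tp = tail_props[of j t Q, OF _ _ t0]
      have cQ: "chain v D Q" "okd v R D Q" "\<forall>x\<in>set Q. snd x \<ge> ret v t (D!j)" "ret v t (D!j) > t"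
        "j < length D" "valid_delivery v R t (D!j)"
        using tp Cons.prems y by auto
      show ?case
      proof (cases "t \<ge> ?b")
        case True
        have "\<forall>x\<in>set (y#Q). snd x \<ge> ?b" using True cQ(3,4) y by force
        hence "cnt (U - {i}) (fst ` set S) (y#Q) \<le> length S" using IH Cons.prems by blast
        thus ?thesis using mono[of "y#Q"] by simp
      next
        case tb: False
        show ?thesis
        proof (cases "j \<in> U")
          case False
          have "cnt U ?G Q \<le> length ((i,s)#S)"
            using Cons.IH cQ Cons.prems st y by force
          thus ?thesis using False y by (simp add: cnt_Cons)
        next
          case jU: True
          have "ret v t (D!j) \<ge> ?b"
          proof (cases "es v R (D!j) \<le> s")
            case True
            have "ls v R (D!j) \<ge> t" using valid_iff[OF t0 cQ(5)] cQ(6) by simp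
            hence "s \<le> ls v R (D!j)" using st by linarith
            hence "j \<in> Fset v R D s U" using True jU unfolding Fset_def by auto
            hence "?b \<le> ret v s (D!j)" using pick.hyps(2) by blast
            also have "\<dots> \<le> ret v t (D!j)"
              using ret_mono[OF v1 noteq[OF pick.prems(1) cQ(5)] noteq[OF t0 cQ(5)] st] .
            finally show ?thesis .
          next
            case False
            have "\<not> inside v R s (D!j)" using inside_iff[OF v1 R0] False by simp
            hence "ret v t (D!j) > s + R/v" using key[OF v1 R0 noteq[OF t0 cQ(5)] st _ cQ(6)] by simp
            thus ?thesis using bL by simp
          qed
          hence "\<forall>x\<in>set Q. snd x \<ge> ?b" using cQ(3) by force
          hence "cnt (U - {i}) (fst ` set S) Q \<le> length S" using IH cQ by blast
          hence "cnt U ?G Q \<le> length S" using mono[of Q] by simp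
          thus ?thesis using y by (simp add: cnt_Cons)
        qed
      qed
    qed
  qed
next
  case (jump s U S)
  let ?s' = "Min {es v R (D ! i) | i. i \<in> U \<and> es v R (D ! i) > s}"
  have Ul: "U \<subseteq> {..<length D}" using jump.prems(2) init_sub by blast
  have s's: "?s' > s" using jump_min(1)[OF Ul jump.hyps(2)] .
  have IH: "\<forall>Q. chain v D Q \<and> okd v R D Q \<and> (\<forall>x\<in>set Q. snd x \<ge> ?s') \<longrightarrow> cnt U (fst ` set S) Q \<le> length S"
    using jump.IH s's jump.prems by auto
  show ?case
  proof (intro allI impI)
    fix Q
    show "chain v D Q \<and> okd v R D Q \<and> (\<forall>x\<in>set Q. snd x \<ge> s) \<Longrightarrow> cnt U (fst ` set S) Q \<le> length S"
    proof (induction Q)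
      case Nil thus ?case by (simp add: cnt_def)
    next
      case (Cons y Q)
      obtain j t where y: "y = (j,t)" by (cases y)
      have st: "s \<le> t" using Cons.prems y by auto
      have t0: "t \<ge> 0" using st jump.prems(1) by linarith
      note tp = tail_props[of j t Q, OF _ _ t0]
      have cQ: "chain v D Q" "okd v R D Q" "\<forall>x\<in>set Q. snd x \<ge> ret v t (D!j)" "ret v t (D!j) > t"
        "j < length D" "valid_delivery v R t (D!j)"
        using tp Cons.prems y by auto
      show ?case
      proof (cases "t \<ge> ?s'")
        case True
        have "\<forall>x\<in>set (y#Q). snd x \<ge> ?s'" using True cQ(3,4) y by force
        thus ?thesis using IH Cons.prems by blast
      next
        case False
        have jU: "j \<notin> U"
        proof
          assume jU: "j \<in> U"
          have "es v R (D!j) > s" using es_gt[OF jU cQ(6) st jump.prems(1) cQ(5) jump.hyps(1)] .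
          hence "?s' \<le> es v R (D!j)" using jump_min(3)[OF Ul jump.hyps(2) jU] by simp
          moreover have "es v R (D!j) \<le> t" using valid_iff[OF t0 cQ(5)] cQ(6) by simp
          ultimately show False using False by simp
        qed
        have "cnt U (fst ` set S) Q \<le> length S"
          using Cons.IH cQ Cons.prems st y by force
        thus ?thesis using jU y by (simp add: cnt_Cons)
      qed
    qed
  qed
next
  case (stop s U)
  show ?case
  proof (intro allI impI)
    fix Q assume h: "chain v D Q \<and> okd v R D Q \<and> (\<forall>x\<in>set Q. snd x \<ge> s)"
    have "\<forall>x\<in>set Q. fst x \<notin> U"
    proof (intro ballI notI)
      fix x assume x: "x \<in> set Q" "fst x \<in> U"
      obtain j t where xj: "x = (j,t)" by (cases x)
      have st: "s \<le> t" using h x xj by auto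
      have t0: "t \<ge> 0" using st stop.prems(1) by linarith
      have jl: "j < length D" "valid_delivery v R t (D!j)" using h x xj unfolding okd_def by auto
      have "es v R (D!j) > s" using es_gt[OF _ jl(2) st stop.prems(1) jl(1) stop.hyps(1)] x xj by simp
      thus False using stop.hyps(2) x xj by auto
    qed
    thus "cnt U (fst ` set []) Q \<le> length []" unfolding cnt_def by (simp add: filter_empty_conv)
  qed
qed

lemma final:
  fixes S Sg :: "(nat \<times> real) list"
  assumes g: "greedy_schedule v R D Sg" and f: "feasible v R D S"
  shows "length S \<le> 2 * length Sg"
proof -
  let ?U = "greedy_init v R D"
  let ?G = "fst ` set Sg"
  have gr: "greedy_run v R D 0 ?U Sg" using g unfolding greedy_schedule_def .
  have okS: "okd v R D S" using f unfolding feasible_def okd_def by auto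
  have chS: "chain v D S" using f unfolding feasible_def chain_iff by auto
  have st: "\<forall>x\<in>set S. snd x \<ge> 0"
  proof (cases S)
    case Nil thus ?thesis by simp
  next
    case (Cons y Q)
    obtain j t where y: "y = (j,t)" by (cases y)
    have t0: "t \<ge> 0" using f Cons y unfolding feasible_def by auto
    have "\<forall>x\<in>set Q. snd x \<ge> ret v t (D!j)" "ret v t (D!j) > t"
      using tail_props[of j t Q] chS okS Cons y t0 by auto
    thus ?thesis using Cons y t0 by force
  qed
  have c: "cnt ?U ?G S \<le> length Sg" using greedy_count[OF gr _ subset_refl] okS chS st by auto
  have allU: "\<forall>x\<in>set S. fst x \<in> ?U"
  proof
    fix x assume x: "x \<in> set S"
    obtain j t where xj: "x = (j,t)" by (cases x)
    have "j < length D" "valid_delivery v R t (D!j)" "t \<ge> 0" using okS st x xj unfolding okd_def by auto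
    thus "fst x \<in> ?U" using valid_iff xj unfolding greedy_init_def by auto
  qed
  have l: "length S = length (filter (\<lambda>x. fst x \<in> ?G) S) + length (filter (\<lambda>x. \<not> fst x \<in> ?G) S)"
    by (rule sum_length_filter_compl[symmetric])
  have "filter (\<lambda>x. \<not> fst x \<in> ?G) S = filter (\<lambda>x. fst x \<in> ?U \<and> fst x \<notin> ?G) S"
    using allU by (intro filter_cong) auto
  hence l2: "length (filter (\<lambda>x. \<not> fst x \<in> ?G) S) \<le> length Sg" using c unfolding cnt_def by simp
  have dS: "distinct (map fst S)" using f unfolding feasible_def by simp
  have "distinct (map fst (filter (\<lambda>x. fst x \<in> ?G) S))" using dS by (simp add: distinct_map_filter)
  hence "length (filter (\<lambda>x. fst x \<in> ?G) S) = card (set (map fst (filter (\<lambda>x. fst x \<in> ?G) S)))"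
    by (metis distinct_card length_map)
  also have "\<dots> \<le> card ?G" by (rule card_mono) auto
  also have "\<dots> \<le> length Sg" using card_image_le[of "set Sg" fst] card_length[of Sg] by simp
  finally show ?thesis using l l2 by simp
qed

end

theorem theorem4p1:
  fixes v R :: real and D :: "(real \<times> real) list"
  assumes "v > 1" and "R > 0"
    and "\<forall>d \<in> set D. \<not> (snd d = 0 \<and> fst d \<ge> 0)"
  shows "(\<exists>Sg. greedy_schedule v R D Sg) \<and>
         (\<forall>Sg. greedy_schedule v R D Sg \<longrightarrow>
            feasible v R D Sg \<and>
            (\<forall>S. feasible v R D S \<longrightarrow> length S \<le> 2 * length Sg))"
proof -
  interpret TD v R D using assms by unfold_locales
  have fin: "finite (greedy_init v R D)" using init_sub finite_subset by blast
  show ?thesis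
  proof (intro conjI allI impI)
    show "\<exists>Sg. greedy_schedule v R D Sg"
      unfolding greedy_schedule_def using greedy_exists[OF fin] by blast
  next
    fix Sg assume g: "greedy_schedule v R D Sg"
    have gr: "greedy_run v R D 0 (greedy_init v R D) Sg" using g unfolding greedy_schedule_def .
    have inv: "distinct (map fst Sg) \<and> fst ` set Sg \<subseteq> greedy_init v R D \<and> okd v R D Sg
         \<and> chain v D Sg \<and> (Sg \<noteq> [] \<longrightarrow> snd (hd Sg) \<ge> 0)"
      using greedy_inv[OF gr _ subset_refl] by auto
    show "feasible v R D Sg"
      unfolding feasible_def using inv unfolding okd_def chain_iff by auto
    fix S assume "feasible v R D S"
    thus "length S \<le> 2 * length Sg" using final[OF g] by blast
  qed
qed

end
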